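(* Let $k\ge 2$ and let $P\subset\mathbb{R}^k$ be a finite point set with properties $a_1,\dots,a_k\colon P\to\{-1,1\}$, each strictly linearly separable on $P$, such that all $2^k$ possible labels occur in $P$. For $i=2,\dots,k$ let $H_i$ be a hyperplane strictly separating $P^i_-$ from $P^i_+$, with normal $v_i$. Then for every unit vector $w\in\mathbb{R}^k$ with $w\cdot v_i=0$ for all $i=2,\dots,k$, the projected sets $P'_-$ and $P'_+$ are not strictly linearly separable in $w^\perp$.
   Context: $P^i_{\pm}=\{p\in P: a_i(p)=\pm1\}$, $P_\pm=P^1_\pm$; the label of $p$ is $(a_1(p),\dots,a_k(p))$. Projection along a unit vector $w$: $p'=p-(p\cdot w)w$, and $X'$ denotes the image of $X$. Finite sets $X,Y$ in a linear subspace $L$ are strictly linearly separable (in $L$) if there exist a unit $v\in L$ and $c\in\mathbb{R}$ with $v\cdot x<c<v\cdot y$ for all $x\in X$, $y\in Y$. *)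

theory Defs
  imports "HOL-Analysis.Analysis"
begin

definition strictly_lin_sep :: "('a::real_inner) set \<Rightarrow> 'a set \<Rightarrow> 'a set \<Rightarrow> bool" where
  "strictly_lin_sep L X Y \<longleftrightarrow>
     (\<exists>v c. v \<in> L \<and> norm v = 1 \<and> (\<forall>x\<in>X. v \<bullet> x < c) \<and> (\<forall>y\<in>Y. c < v \<bullet> y))"

definition proj_along :: "('a::real_inner) \<Rightarrow> 'a \<Rightarrow> 'a" where
  "proj_along w p = p - (p \<bullet> w) *\<^sub>R w"

definition part_minus :: "(nat \<Rightarrow> 'a \<Rightarrow> int) \<Rightarrow> nat \<Rightarrow> 'a set \<Rightarrow> 'a set" where
  "part_minus a i P = {p\<in>P. a i p = -1}"

definition part_plus :: "(nat \<Rightarrow> 'a \<Rightarrow> int) \<Rightarrow> nat \<Rightarrow> 'a set \<Rightarrow> 'a set" where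
  "part_plus a i P = {p\<in>P. a i p = 1}"

end

theory Submission
  imports Defs
begin

lemma fam_dep:
  fixes g :: "nat \<Rightarrow> 'a::euclidean_space"
  assumes gS: "\<forall>i\<in>{1..m}. g i \<in> S" and dS: "dim S < m"
  shows "\<exists>\<mu>. (\<exists>i\<in>{1..m}. \<mu> i \<noteq> 0) \<and> (\<Sum>i\<in>{1..m}. \<mu> i *\<^sub>R g i) = 0"
proof (cases "inj_on g {1..m}")
  case False
  then obtain i j where ij: "i \<in> {1..m}" "j \<in> {1..m}" "i \<noteq> j" "g i = g j"
    unfolding inj_on_def by blast
  define \<mu> where "\<mu> = (\<lambda>x::nat. if x = i then (1::real) else if x = j then -1 else 0)"
  have eq: "\<And>x. \<mu> x *\<^sub>R g x = (if x = i then g i else 0) - (if x = j then g j else 0)"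
    using ij(3) by (simp add: \<mu>_def)
  have "(\<Sum>x\<in>{1..m}. \<mu> x *\<^sub>R g x) = 0"
    unfolding eq sum_subtractf using ij by simp
  moreover have "\<mu> i \<noteq> 0" by (simp add: \<mu>_def)
  ultimately show ?thesis using ij(1) by blast
next
  case True
  let ?B = "g ` {1..m}"
  have cB: "card ?B = m" using True by (simp add: card_image)
  have BS: "?B \<subseteq> S" using gS by blast
  have "dependent ?B"
  proof (rule ccontr)
    assume "\<not> dependent ?B"
    then have "card ?B \<le> dim S" using independent_card_le_dim BS by blast
    then show False using cB dS by simp
  qed
  then obtain u where u: "\<exists>v\<in>?B. u v \<noteq> 0" "(\<Sum>v\<in>?B. u v *\<^sub>R v) = 0"
    using dependent_finite[of ?B] by auto
  have "(\<Sum>i\<in>{1..m}. u (g i) *\<^sub>R g i) = 0"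
    using u(2) sum.reindex[OF True, of "\<lambda>v. u v *\<^sub>R v"] by (simp add: o_def)
  moreover have "\<exists>i\<in>{1..m}. u (g i) \<noteq> 0" using u(1) by blast
  ultimately show ?thesis by (intro exI[of _ "\<lambda>i. u (g i)"]) auto
qed

theorem mainTheorem4:
  fixes P :: "(real^'n) set"
    and a :: "nat \<Rightarrow> real^'n \<Rightarrow> int"
    and v :: "nat \<Rightarrow> real^'n"
    and w :: "real^'n"
  assumes k2: "CARD('n) \<ge> 2"
    and finP: "finite P"
    and vals: "\<forall>i\<in>{1..CARD('n)}. \<forall>p\<in>P. a i p \<in> {-1, 1}"
    and sep: "\<forall>i\<in>{1..CARD('n)}. strictly_lin_sep UNIV (part_minus a i P) (part_plus a i P)"
    and labels: "\<forall>s::nat \<Rightarrow> int. (\<forall>i\<in>{1..CARD('n)}. s i \<in> {-1, 1}) \<longrightarrow>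
                   (\<exists>p\<in>P. \<forall>i\<in>{1..CARD('n)}. a i p = s i)"
    and hyp: "\<forall>i\<in>{2..CARD('n)}. v i \<noteq> 0 \<and> (\<exists>c.
                 ((\<forall>x\<in>part_minus a i P. v i \<bullet> x < c) \<and> (\<forall>y\<in>part_plus a i P. c < v i \<bullet> y)) \<or>
                 ((\<forall>x\<in>part_plus a i P. v i \<bullet> x < c) \<and> (\<forall>y\<in>part_minus a i P. c < v i \<bullet> y)))"
    and wunit: "norm w = 1"
    and worth: "\<forall>i\<in>{2..CARD('n)}. w \<bullet> v i = 0"
  shows "\<not> strictly_lin_sep {x. x \<bullet> w = 0}
            (proj_along w ` part_minus a 1 P) (proj_along w ` part_plus a 1 P)"
proof
  let ?k = "CARD('n)"
  assume "strictly_lin_sep {x. x \<bullet> w = 0}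
            (proj_along w ` part_minus a 1 P) (proj_along w ` part_plus a 1 P)"
  then obtain u c1 where u: "u \<bullet> w = 0"
    "\<forall>x\<in>part_minus a 1 P. u \<bullet> proj_along w x < c1"
    "\<forall>y\<in>part_plus a 1 P. c1 < u \<bullet> proj_along w y"
    unfolding strictly_lin_sep_def by auto
  have pr: "u \<bullet> proj_along w x = u \<bullet> x" for x
    using u(1) by (simp add: proj_along_def inner_diff_right)
  have good: "\<exists>gi ci. w \<bullet> gi = 0 \<and> (\<forall>p\<in>P. (a i p = -1 \<longrightarrow> gi \<bullet> p < ci) \<and> (a i p = 1 \<longrightarrow> ci < gi \<bullet> p))"
    if i: "i \<in> {1..?k}" for i
  proof (cases "i = 1")
    case True
    show ?thesis
      apply (rule exI[of _ u], rule exI[of _ c1])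
      using u True pr by (auto simp: part_minus_def part_plus_def inner_commute)
  next
    case False
    then have i2: "i \<in> {2..?k}" using i by auto
    then obtain c where c: "((\<forall>x\<in>part_minus a i P. v i \<bullet> x < c) \<and> (\<forall>y\<in>part_plus a i P. c < v i \<bullet> y)) \<or>
                 ((\<forall>x\<in>part_plus a i P. v i \<bullet> x < c) \<and> (\<forall>y\<in>part_minus a i P. c < v i \<bullet> y))"
      using hyp by blast
    have wv: "w \<bullet> v i = 0" using worth i2 by blast
    show ?thesis
    proof (cases "(\<forall>x\<in>part_minus a i P. v i \<bullet> x < c) \<and> (\<forall>y\<in>part_plus a i P. c < v i \<bullet> y)")
      case True
      show ?thesis
        apply (rule exI[of _ "v i"], rule exI[of _ c])
        using True wv by (auto simp: part_minus_def part_plus_def)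
    next
      case False
      with c have cc: "(\<forall>x\<in>part_plus a i P. v i \<bullet> x < c) \<and> (\<forall>y\<in>part_minus a i P. c < v i \<bullet> y)" by blast
      show ?thesis
        apply (rule exI[of _ "- v i"], rule exI[of _ "- c"])
        using cc wv by (auto simp: part_minus_def part_plus_def)
    qed
  qed
  then obtain g cf where g: "\<And>i. i \<in> {1..?k} \<Longrightarrow> w \<bullet> g i = 0 \<and>
      (\<forall>p\<in>P. (a i p = -1 \<longrightarrow> g i \<bullet> p < cf i) \<and> (a i p = 1 \<longrightarrow> cf i < g i \<bullet> p))"
    by metis
  have w0: "w \<noteq> 0" using wunit by auto
  have dimS: "dim {x. w \<bullet> x = 0} < ?k"
    using dim_hyperplane[OF w0] k2 by simp
  obtain \<mu> where mu: "\<exists>i\<in>{1..?k}. \<mu> i \<noteq> 0" "(\<Sum>i\<in>{1..?k}. \<mu> i *\<^sub>R g i) = 0"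
    using fam_dep[of ?k g "{x. w \<bullet> x = 0}"] g dimS by auto
  define s where "s = (\<lambda>i. if \<mu> i \<ge> 0 then (1::int) else -1)"
  have s1: "\<forall>i\<in>{1..?k}. s i \<in> {-1, 1}" and s2: "\<forall>i\<in>{1..?k}. - s i \<in> {-1, 1}"
    by (auto simp: s_def)
  obtain p where p: "p \<in> P" "\<forall>i\<in>{1..?k}. a i p = s i"
    using labels s1 by blast
  obtain q where q: "q \<in> P" "\<forall>i\<in>{1..?k}. a i q = - s i"
    using spec[OF labels, of "\<lambda>i. - s i"] s2 by blast
  have term_nn: "0 \<le> \<mu> i * (g i \<bullet> p - g i \<bullet> q)" if i: "i \<in> {1..?k}" for i
  proof (cases "\<mu> i \<ge> 0")
    case True
    then have "g i \<bullet> q < cf i" "cf i < g i \<bullet> p"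
      using g[OF i] p q i by (auto simp: s_def)
    then show ?thesis using True by simp
  next
    case False
    then have "g i \<bullet> p < cf i" "cf i < g i \<bullet> q"
      using g[OF i] p q i by (auto simp: s_def)
    then show ?thesis using False by (simp add: mult_nonpos_nonpos)
  qed
  obtain j where j: "j \<in> {1..?k}" "\<mu> j \<noteq> 0" using mu(1) by blast
  have term_pos: "0 < \<mu> j * (g j \<bullet> p - g j \<bullet> q)"
  proof (cases "\<mu> j > 0")
    case True
    then have "g j \<bullet> q < cf j" "cf j < g j \<bullet> p"
      using g[OF j(1)] p q j by (auto simp: s_def)
    then show ?thesis using True by simp
  next
    case False
    then have neg: "\<mu> j < 0" using j(2) by simp
    then have "g j \<bullet> p < cf j" "cf j < g j \<bullet> q"
      using g[OF j(1)] p q j by (auto simp: s_def)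
    then show ?thesis using neg by (simp add: mult_neg_neg)
  qed
  have "0 < (\<Sum>i\<in>{1..?k}. \<mu> i * (g i \<bullet> p - g i \<bullet> q))"
    by (rule sum_pos2[of "{1..?k}" j]) (use term_nn term_pos j(1) in auto)
  also have "\<dots> = (\<Sum>i\<in>{1..?k}. \<mu> i *\<^sub>R g i) \<bullet> (p - q)"
    by (simp add: inner_sum_left inner_diff_right right_diff_distrib sum_subtractf)
  also have "\<dots> = 0" using mu(2) by simp
  finally show False by simp
qed

end
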